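(* Fix an integer $k\ge2$ and let $w,\sigma=w^{-1},\widetilde w$ be as in the context. Let $l\in\{0,\dots,n\}$ and let $I$ be an interval carrying $w_{n-l}$. Then for every $m\in\{0,\dots,k-2\}$, $$\int_{I_m}(\widetilde w)^2\sigma\le 30\,p^2\,w(I_m).$$
   Context: All intervals are half-open, $[a,b)$; $w(E)=\int_E w$. Fix an integer $k\ge2$, $\varepsilon=3^{-k}$, $p=\frac{1}{3\varepsilon}\Big(\frac{1+\varepsilon}{2}+\frac{4\varepsilon^2}{1+\varepsilon}\Big)$, $u=\sqrt p+\sqrt{p-1}$. For an interval $I$: $I_\pm$ its left/right halves; $I_m$ ($0\le m\le k-1$) the interval with the same right endpoint as $I$ and length $3^{-m}|I|$; $J^{(i)}$ ($i=1,2,3$) the $i$-th from the left of the three equal thirds of $J$. For $\omega\sigma=p$: $w_0(\omega,\sigma,I)=\frac{\omega}{\sqrt p}(u\chi_{I_-}+u^{-1}\chi_{I_+})$ and, for $\nu\ge1$, $w_\nu(\omega,\sigma,I)=\frac{\omega}{p}\big(\sum_{m=0}^{k-2}\chi_{I_m^{(1)}}+\chi_{I_{k-1}^{(1)}\cup I_{k-1}^{(2)}}+\frac{4\varepsilon}{1+\varepsilon}\chi_{I_{k-1}^{(3)}}\big)+\sum_{m=0}^{k-2}w_{\nu-1}(2\omega,\frac\sigma2,I_m^{(2)})$. Let $n=3^{k-1}$, let $w$ be the $1$-periodic extension of $w_n(1,p,[0,1))$ to $\mathbb R$, and $\sigma=w^{-1}$. Carrying: each $[j,j+1)$, $j\in\mathbb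 Z$, carries $w_n$; if $I$ carries $w_\nu$ with $\nu\ge1$, then each $I_m^{(2)}$, $0\le m\le k-2$, carries $w_{\nu-1}$. $\operatorname{supp}w_\nu$ is the union of all intervals carrying $w_\nu$. $\widetilde w=\sum_{l=1}^n2^l\chi_{\operatorname{supp}w_{n-(l-1)}\setminus\operatorname{supp}w_{n-l}}+2^{n+1}\chi_{\operatorname{supp}w_0}$. *)

theory Defs
  imports "HOL-Analysis.Analysis"
begin

text \<open>Intervals are half-open [a,b), represented by their endpoints (a,b).\<close>

definition eps :: "nat \<Rightarrow> real" where
  "eps k = 1 / 3 ^ k"

definition pp :: "nat \<Rightarrow> real" where
  "pp k = 1 / (3 * eps k) * ((1 + eps k) / 2 + 4 * (eps k)^2 / (1 + eps k))"

definition uu :: "nat \<Rightarrow> real" where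
  "uu k = sqrt (pp k) + sqrt (pp k - 1)"

definition nn :: "nat \<Rightarrow> nat" where
  "nn k = 3 ^ (k - 1)"

definition ico :: "real \<times> real \<Rightarrow> real set" where
  "ico I = {fst I..<snd I}"

text \<open>I_m: same right endpoint as I, length 3^(-m) |I|.\<close>
definition subI :: "real \<times> real \<Rightarrow> nat \<Rightarrow> real \<times> real" where
  "subI I m = (snd I - (snd I - fst I) / 3 ^ m, snd I)"

text \<open>J^(i): i-th (i=1,2,3) third of J from the left.\<close>
definition third :: "real \<times> real \<Rightarrow> nat \<Rightarrow> real \<times> real" where
  "third J i = (fst J + (real i - 1) * (snd J - fst J) / 3, fst J + real i * (snd J - fst J) / 3)"

definition lefthalf :: "real \<times> real \<Rightarrow> real \<times> real" where
  "lefthalf I = (fst I, (fst I + snd I) / 2)"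

definition righthalf :: "real \<times> real \<Rightarrow> real \<times> real" where
  "righthalf I = ((fst I + snd I) / 2, snd I)"

text \<open>w_0(omega, sigma, I); the parameter sigma does not enter the values.\<close>
definition w0 :: "nat \<Rightarrow> real \<Rightarrow> real \<Rightarrow> real \<times> real \<Rightarrow> real \<Rightarrow> real" where
  "w0 k \<omega> \<sigma> I x = \<omega> / sqrt (pp k) *
     (uu k * indicator (ico (lefthalf I)) x + (1 / uu k) * indicator (ico (righthalf I)) x)"

fun wnu :: "nat \<Rightarrow> nat \<Rightarrow> real \<Rightarrow> real \<Rightarrow> real \<times> real \<Rightarrow> real \<Rightarrow> real" where
  "wnu k 0 \<omega> \<sigma> I x = w0 k \<omega> \<sigma> I x"
| "wnu k (Suc \<nu>) \<omega> \<sigma> I x =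
     \<omega> / pp k * ((\<Sum>m = 0..k - 2. indicator (ico (third (subI I m) 1)) x)
        + indicator (ico (third (subI I (k - 1)) 1) \<union> ico (third (subI I (k - 1)) 2)) x
        + 4 * eps k / (1 + eps k) * indicator (ico (third (subI I (k - 1)) 3)) x)
     + (\<Sum>m = 0..k - 2. wnu k \<nu> (2 * \<omega>) (\<sigma> / 2) (third (subI I m) 2) x)"

definition ww :: "nat \<Rightarrow> real \<Rightarrow> real" where
  "ww k x = wnu k (nn k) 1 (pp k) (0, 1) (frac x)"

definition sig :: "nat \<Rightarrow> real \<Rightarrow> real" where
  "sig k x = 1 / ww k x"

inductive carries :: "nat \<Rightarrow> nat \<Rightarrow> real \<times> real \<Rightarrow> bool" for k where
  base: "carries k (nn k) (real_of_int j, real_of_int j + 1)"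
| step: "carries k (Suc \<nu>) I \<Longrightarrow> m \<le> k - 2 \<Longrightarrow> carries k \<nu> (third (subI I m) 2)"

definition suppw :: "nat \<Rightarrow> nat \<Rightarrow> real set" where
  "suppw k \<nu> = (\<Union>I \<in> {I. carries k \<nu> I}. ico I)"

definition wtilde :: "nat \<Rightarrow> real \<Rightarrow> real" where
  "wtilde k x = (\<Sum>l = 1..nn k. 2 ^ l * indicator (suppw k (nn k - (l - 1)) - suppw k (nn k - l)) x)
     + 2 ^ (nn k + 1) * indicator (suppw k 0) x"

end

theory Submission
  imports Defs
begin

lemma mem_ico: "x \<in> ico J \<longleftrightarrow> 0 < snd J - x \<and> snd J - x \<le> snd J - fst J"
  by (auto simp: ico_def)

lemma subI_eq: "subI J m = (snd J - (snd J - fst J) / 3^m, snd J)"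
  by (simp add: subI_def)

lemma third_gen:
  fixes b M :: real
  shows "x \<in> ico (third (b - M, b) 1) \<longleftrightarrow> 2 * M / 3 < b - x \<and> b - x \<le> M"
    and "x \<in> ico (third (b - M, b) 2) \<longleftrightarrow> M / 3 < b - x \<and> b - x \<le> 2 * M / 3"
    and "x \<in> ico (third (b - M, b) 3) \<longleftrightarrow> 0 < b - x \<and> b - x \<le> M / 3"
  by (auto simp: ico_def third_def field_simps)

lemma mem_P1: "x \<in> ico (third (subI J m) 1) \<longleftrightarrow>
   2 * (snd J - fst J) / 3^(Suc m) < snd J - x \<and> snd J - x \<le> (snd J - fst J) / 3^m"
  unfolding subI_eq third_gen by auto

lemma mem_P1': "x \<in> ico (third (subI J m) (Suc 0)) \<longleftrightarrow>
   2 * (snd J - fst J) / 3^(Suc m) < snd J - x \<and> snd J - x \<le> (snd J - fst J) / 3^m"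
  using mem_P1 by simp

lemma mem_P2: "x \<in> ico (third (subI J m) 2) \<longleftrightarrow>
   (snd J - fst J) / 3^(Suc m) < snd J - x \<and> snd J - x \<le> 2 * (snd J - fst J) / 3^(Suc m)"
  unfolding subI_eq third_gen by auto

lemma mem_P3: "x \<in> ico (third (subI J m) 3) \<longleftrightarrow>
   0 < snd J - x \<and> snd J - x \<le> (snd J - fst J) / 3^(Suc m)"
  unfolding subI_eq third_gen by auto

lemma mem_sub: "x \<in> ico (subI J m) \<longleftrightarrow> 0 < snd J - x \<and> snd J - x \<le> (snd J - fst J) / 3^m"
  by (auto simp: ico_def subI_def field_simps)

lemma child_fst: "fst (third (subI J m) 2) = snd J - 2 * (snd J - fst J) / 3^(Suc m)"
  by (simp add: third_def subI_def field_simps)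
lemma child_snd: "snd (third (subI J m) 2) = snd J - (snd J - fst J) / 3^(Suc m)"
  by (simp add: third_def subI_def field_simps)

lemma eps_pos: "0 < eps k" by (simp add: eps_def)
lemma eps_le: "2 \<le> k \<Longrightarrow> eps k \<le> 1/9"
proof -
  assume "2 \<le> k"
  then have "(3::real)^2 \<le> 3^k" by (rule power_increasing) auto
  then show ?thesis by (simp add: eps_def divide_simps)
qed

lemma pp_eq: "3 * eps k * pp k = (1 + eps k)/2 + 4 * (eps k)^2 / (1 + eps k)"
proof -
  have e: "eps k \<noteq> 0" using eps_pos[of k] by simp
  show ?thesis unfolding pp_def using e by simp
qed

lemma pp_eq2: "pp k = ((1 + eps k)/2 + 4 * (eps k)^2 / (1 + eps k)) / (3 * eps k)"
  unfolding pp_def by simp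

lemma pp_ge: "(1 + eps k) / eps k \<le> 6 * pp k"
proof -
  have e: "0 < eps k" by (rule eps_pos)
  have "6 * pp k = (1 + eps k)/eps k + 8 * eps k / (1 + eps k)"
    unfolding pp_eq2 using e by (simp add: divide_simps) (simp add: algebra_simps power2_eq_square)
  moreover have "0 \<le> 8 * eps k / (1 + eps k)" using e by simp
  ultimately show ?thesis by linarith
qed

lemma pp_gt1: "2 \<le> k \<Longrightarrow> 1 < pp k"
proof -
  assume k: "2 \<le> k"
  have e: "0 < eps k" "eps k \<le> 1/9" using eps_pos eps_le[OF k] by auto
  have "(1 + eps k)/eps k \<ge> 10"
    using e by (simp add: field_simps)
  with pp_ge[of k] show ?thesis by linarith
qed

lemma uu_facts:
  assumes "1 < pp k"
  shows "0 < uu k" "1 \<le> uu k" "uu k + 1 / uu k = 2 * sqrt (pp k)" "(uu k)^2 \<le> 4 * pp k"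
proof -
  let ?a = "sqrt (pp k)" and ?b = "sqrt (pp k - 1)"
  have p1: "1 \<le> pp k" using assms by (rule less_imp_le)
  have a2: "?a^2 = pp k" using p1 by simp
  have b2: "?b^2 = pp k - 1" using p1 by simp
  have a1: "?a \<ge> 1" using p1 by simp
  have b0: "?b \<ge> 0" using p1 by simp
  have ba: "?b \<le> ?a" by (rule real_sqrt_le_mono) simp
  show "0 < uu k" "1 \<le> uu k" unfolding uu_def using a1 b0 by linarith+
  have "(?a + ?b) * (?a - ?b) = 1" using a2 b2 by (simp add: algebra_simps power2_eq_square)
  then have "?a - ?b = 1 / (?a + ?b)"
    by (intro eq_divide_imp) (use a1 b0 in \<open>auto simp: mult.commute\<close>)
  then have "1 / (?a + ?b) = ?a - ?b" by simp
  then show "uu k + 1 / uu k = 2 * sqrt (pp k)" by (simp add: uu_def)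
  have "uu k \<le> 2 * ?a" using ba by (simp add: uu_def)
  then have "(uu k)^2 \<le> (2 * ?a)^2" using a1 b0 by (intro power_mono) (auto simp: uu_def)
  then show "(uu k)^2 \<le> 4 * pp k" using a2 by (simp add: power_mult_distrib)
qed

lemma pow_div_mono: "(L::real) \<ge> 0 \<Longrightarrow> m \<le> m' \<Longrightarrow> L / 3^m' \<le> L / 3^m"
  by (intro divide_left_mono power_increasing) auto

lemma band_unique:
  fixes L s :: real
  assumes "0 < L" "L / 3^(Suc m) < s" "s \<le> L / 3^m" "L / 3^(Suc j) < s" "s \<le> L / 3^j"
  shows "m = j"
proof (rule ccontr)
  assume "m \<noteq> j"
  then have "Suc m \<le> j \<or> Suc j \<le> m" by auto
  then show False
  proof
    assume "Suc m \<le> j"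
    then have "L / 3^j \<le> L / 3^(Suc m)" using assms(1) by (intro pow_div_mono) auto
    with assms show False by linarith
  next
    assume "Suc j \<le> m"
    then have "L / 3^m \<le> L / 3^(Suc j)" using assms(1) by (intro pow_div_mono) auto
    with assms show False by linarith
  qed
qed

lemma band_exists_gen:
  fixes L s :: real
  shows "L / 3^N < s \<Longrightarrow> s \<le> L \<Longrightarrow> \<exists>j<N. L / 3^(Suc j) < s \<and> s \<le> L / 3^j"
proof (induction N)
  case 0 then show ?case by simp
next
  case (Suc N)
  show ?case
  proof (cases "s \<le> L / 3^N")
    case True then show ?thesis using Suc.prems by auto
  next
    case False
    then obtain j where "j < N" "L / 3^(Suc j) < s \<and> s \<le> L / 3^j" using Suc by auto
    then show ?thesis by (intro exI[of _ j]) auto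
  qed
qed

lemma sum_single:
  assumes "finite A" "j \<in> A" "\<And>m. m \<in> A \<Longrightarrow> m \<noteq> j \<Longrightarrow> f m = 0"
  shows "sum f A = f j"
proof -
  have "sum f A = f j + sum f (A - {j})" using assms by (simp add: sum.remove)
  also have "sum f (A - {j}) = 0" using assms by (intro sum.neutral) auto
  finally show ?thesis by simp
qed

lemma len_third: "snd (third (subI J m) i) - fst (third (subI J m) i) = (snd J - fst J) / 3^(Suc m)"
  by (simp add: third_def subI_def field_simps)

context fixes k :: nat assumes k2: "2 \<le> k" begin

lemma loc_cases:
  assumes J: "fst J < snd J"
  obtains (out) "x \<notin> ico J" "\<forall>m. x \<notin> ico (third (subI J m) 1)" "\<forall>m. x \<notin> ico (third (subI J m) 2)"
      "\<forall>m. x \<notin> ico (third (subI J m) 3)" "\<forall>m. x \<notin> ico (subI J m)"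
  | (p1) j where "j \<le> k - 2" "x \<in> ico J" "\<forall>m. x \<in> ico (third (subI J m) 1) \<longleftrightarrow> m = j"
      "\<forall>m. x \<notin> ico (third (subI J m) 2)" "x \<notin> ico (third (subI J (k-1)) 3)"
      "\<forall>m. x \<in> ico (subI J m) \<longleftrightarrow> m \<le> j"
  | (p2) j where "j \<le> k - 2" "x \<in> ico J" "\<forall>m. x \<notin> ico (third (subI J m) 1)"
      "\<forall>m. x \<in> ico (third (subI J m) 2) \<longleftrightarrow> m = j" "x \<notin> ico (third (subI J (k-1)) 3)"
      "\<forall>m. x \<in> ico (subI J m) \<longleftrightarrow> m \<le> j"
  | (q12) "x \<in> ico J" "\<forall>m\<le>k-2. x \<notin> ico (third (subI J m) 1)" "\<forall>m\<le>k-2. x \<notin> ico (third (subI J m) 2)"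
      "x \<in> ico (third (subI J (k-1)) 1) \<union> ico (third (subI J (k-1)) 2)"
      "x \<notin> ico (third (subI J (k-1)) 3)" "\<forall>m\<le>k-1. x \<in> ico (subI J m)"
  | (q3) "x \<in> ico J" "\<forall>m\<le>k-2. x \<notin> ico (third (subI J m) 1)" "\<forall>m\<le>k-2. x \<notin> ico (third (subI J m) 2)"
      "x \<notin> ico (third (subI J (k-1)) 1)" "x \<notin> ico (third (subI J (k-1)) 2)"
      "x \<in> ico (third (subI J (k-1)) 3)" "\<forall>m\<le>k-1. x \<in> ico (subI J m)"
proof -
  define L where "L = snd J - fst J"
  define s where "s = snd J - x"
  have L0: "0 < L" using J by (simp add: L_def)
  have mono: "\<And>m m'. m \<le> m' \<Longrightarrow> L / 3^m' \<le> L / 3^m" using L0 by (intro pow_div_mono) auto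
  have pos: "\<And>m. 0 < L / 3^m" using L0 by simp
  have sk: "Suc (k - 1) = k" "Suc (k - Suc 0) = k" using k2 by simp_all
  have h2: "\<And>m. 2 * L / 3^m = 2 * (L / 3^m)" by simp
  note defs = mem_P1 mem_P1' mem_P2 mem_P3 mem_sub mem_ico
  note defs' = defs[of x J, folded L_def s_def]
  show thesis
  proof (cases "s \<le> 0 \<or> L < s")
    case True
    have A: "\<And>m. L / 3^m \<le> L" using mono[of 0] by simp
    show ?thesis
    proof (rule out)
      show "x \<notin> ico J" using True by (auto simp: defs')
      show "\<forall>m. x \<notin> ico (third (subI J m) 1)" "\<forall>m. x \<notin> ico (third (subI J m) 2)"
        "\<forall>m. x \<notin> ico (third (subI J m) 3)" "\<forall>m. x \<notin> ico (subI J m)"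
      proof (simp_all only: defs' not_def, safe)
        fix m
        have "2 * L / 3^Suc m = 2 * (L / 3^Suc m)" "L / 3^m = 3 * (L / 3^Suc m)" by simp_all
        note h = this A[of m] pos[of m] pos[of "Suc m"] True
        { assume "2 * L / 3 ^ Suc m < s" "s \<le> L / 3 ^ m" then show False using h by linarith }
        { assume "L / 3 ^ Suc m < s" "s \<le> 2 * L / 3 ^ Suc m" then show False using h A[of "Suc m"] by linarith }
        { assume "0 < s" "s \<le> L / 3 ^ Suc m" then show False using h A[of "Suc m"] by linarith }
        { assume "0 < s" "s \<le> L / 3 ^ m" then show False using h by linarith }
      qed
    qed
  next
    case False
    then have s0: "0 < s" "s \<le> L" by auto
    then have xJ: "x \<in> ico J" by (simp add: defs')
    show ?thesis
    proof (cases "s \<le> L / 3^(k-1)")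
      case True
      have subs: "\<forall>m\<le>k-1. x \<in> ico (subI J m)"
        using True s0 mono by (auto simp: defs') (meson order_trans)
      have n1: "\<forall>m\<le>k-2. x \<notin> ico (third (subI J m) 1)"
      proof (intro allI impI)
        fix m assume "m \<le> k - 2"
        then have "L / 3^(k-1) \<le> L / 3^(Suc m)" using k2 by (intro mono) auto
        then show "x \<notin> ico (third (subI J m) 1)" using True pos[of "Suc m"] by (simp add: defs')
      qed
      have n2: "\<forall>m\<le>k-2. x \<notin> ico (third (subI J m) 2)"
      proof (intro allI impI)
        fix m assume "m \<le> k - 2"
        then have "L / 3^(k-1) \<le> L / 3^(Suc m)" using k2 by (intro mono) auto
        then show "x \<notin> ico (third (subI J m) 2)" using True by (simp add: defs'; linarith)
      qed
      show ?thesis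
      proof (cases "s \<le> L / 3^k")
        case True
        show ?thesis
        proof (rule q3[OF xJ n1 n2 _ _ _ subs])
          show "x \<notin> ico (third (subI J (k-1)) 1)"
            using True pos[of k] h2[of k] by (simp add: defs' sk; linarith)
          show "x \<notin> ico (third (subI J (k-1)) 2)"
            using True pos[of k] h2[of k] by (simp add: defs' sk; linarith)
          show "x \<in> ico (third (subI J (k-1)) 3)" using True s0 by (simp add: defs' sk)
        qed
      next
        case False
        show ?thesis
        proof (rule q12[OF xJ n1 n2 _ _ subs])
          show "x \<in> ico (third (subI J (k-1)) 1) \<union> ico (third (subI J (k-1)) 2)"
            using False \<open>s \<le> L / 3^(k-1)\<close> by (simp add: defs' sk; linarith)
          show "x \<notin> ico (third (subI J (k-1)) 3)" using False by (simp add: defs' sk)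
        qed
      qed
    next
      case False
      then obtain j where j: "j < k - 1" "L / 3^(Suc j) < s" "s \<le> L / 3^j"
        using band_exists_gen[of L "k-1" s] s0 by auto
      have jk: "j \<le> k - 2" using j by simp
      have band: "\<And>m. L / 3^(Suc m) < s \<Longrightarrow> s \<le> L / 3^m \<Longrightarrow> m = j"
        using band_unique[OF L0] j by blast
      have q3n: "x \<notin> ico (third (subI J (k-1)) 3)"
      proof -
        have "L / 3^k \<le> L / 3^(Suc j)" using j by (intro mono) auto
        then show ?thesis using j by (simp add: defs' sk)
      qed
      have subs: "\<forall>m. x \<in> ico (subI J m) \<longleftrightarrow> m \<le> j"
      proof
        fix m show "x \<in> ico (subI J m) \<longleftrightarrow> m \<le> j"
        proof
          assume "x \<in> ico (subI J m)"
          then have "s \<le> L / 3^m" by (simp add: defs')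
          show "m \<le> j"
          proof (rule ccontr)
            assume "\<not> m \<le> j"
            then have "L / 3^m \<le> L / 3^(Suc j)" by (intro mono) auto
            with j \<open>s \<le> L / 3^m\<close> show False by linarith
          qed
        next
          assume "m \<le> j"
          then have "L / 3^j \<le> L / 3^m" by (intro mono)
          then show "x \<in> ico (subI J m)" using j s0 by (simp add: defs')
        qed
      qed
      show ?thesis
      proof (cases "2 * L / 3^(Suc j) < s")
        case True
        show ?thesis
        proof (rule p1[OF jk xJ _ _ q3n subs])
          show "\<forall>m. x \<in> ico (third (subI J m) 1) \<longleftrightarrow> m = j"
          proof
            fix m
            have "x \<in> ico (third (subI J m) 1) \<Longrightarrow> m = j"
              by (rule band) (use pos[of "Suc m"] in \<open>auto simp: defs'\<close>)
            then show "x \<in> ico (third (subI J m) 1) \<longleftrightarrow> m = j" using True j by (auto simp: defs')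
          qed
          show "\<forall>m. x \<notin> ico (third (subI J m) 2)"
          proof
            fix m
            show "x \<notin> ico (third (subI J m) 2)"
            proof
              assume a: "x \<in> ico (third (subI J m) 2)"
              have "m = j" by (rule band) (use a pos[of "Suc m"] in \<open>auto simp: defs'\<close>)
              with a True show False by (simp add: defs')
            qed
          qed
        qed
      next
        case False
        show ?thesis
        proof (rule p2[OF jk xJ _ _ q3n subs])
          show "\<forall>m. x \<in> ico (third (subI J m) 2) \<longleftrightarrow> m = j"
          proof
            fix m
            have "x \<in> ico (third (subI J m) 2) \<Longrightarrow> m = j"
              by (rule band) (use pos[of "Suc m"] in \<open>auto simp: defs'\<close>)
            then show "x \<in> ico (third (subI J m) 2) \<longleftrightarrow> m = j" using False j by (auto simp: defs')
          qed
          show "\<forall>m. x \<notin> ico (third (subI J m) 1)"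
          proof
            fix m
            show "x \<notin> ico (third (subI J m) 1)"
            proof
              assume a: "x \<in> ico (third (subI J m) 1)"
              have "m = j" by (rule band) (use a pos[of "Suc m"] in \<open>auto simp: defs'\<close>)
              with a False show False by (simp add: defs')
            qed
          qed
        qed
      qed
    qed
  qed
qed

end

fun Tm :: "nat \<Rightarrow> nat \<Rightarrow> real \<Rightarrow> real \<times> real \<Rightarrow> real \<Rightarrow> real" where
  "Tm k 0 \<omega> J x = 2 * \<omega> * indicator (ico J) x"
| "Tm k (Suc \<nu>) \<omega> J x = 2 * \<omega> * ((\<Sum>m = 0..k - 2. indicator (ico (third (subI J m) 1)) x)
        + indicator (ico (third (subI J (k - 1)) 1) \<union> ico (third (subI J (k - 1)) 2)) x
        + indicator (ico (third (subI J (k - 1)) 3)) x)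
     + (\<Sum>m = 0..k - 2. Tm k \<nu> (2 * \<omega>) (third (subI J m) 2) x)"

fun Gm :: "nat \<Rightarrow> nat \<Rightarrow> real \<Rightarrow> real \<times> real \<Rightarrow> real \<Rightarrow> real" where
  "Gm k 0 \<omega> J x = 4 * \<omega> * sqrt (pp k) *
      (indicator (ico (lefthalf J)) x / uu k + uu k * indicator (ico (righthalf J)) x)"
| "Gm k (Suc \<nu>) \<omega> J x = 4 * \<omega> * pp k * ((\<Sum>m = 0..k - 2. indicator (ico (third (subI J m) 1)) x)
        + indicator (ico (third (subI J (k - 1)) 1) \<union> ico (third (subI J (k - 1)) 2)) x)
     + \<omega> * pp k * (1 + eps k) / eps k * indicator (ico (third (subI J (k - 1)) 3)) x
     + (\<Sum>m = 0..k - 2. Gm k \<nu> (2 * \<omega>) (third (subI J m) 2) x)"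

lemma child_pos: "fst J < snd J \<Longrightarrow> fst (third (subI J m) 2) < snd (third (subI J m) 2)"
proof -
  assume "fst J < snd J"
  then have "0 < (snd J - fst J) / 3^Suc m" by simp
  then show ?thesis using len_third[of J m 2] by linarith
qed

lemma third_le: "fst J \<le> snd J \<Longrightarrow> fst (third (subI J m) i) \<le> snd (third (subI J m) i)"
proof -
  assume "fst J \<le> snd J"
  then have "0 \<le> (snd J - fst J) / 3^Suc m" by simp
  then show ?thesis using len_third[of J m i] by linarith
qed

lemma hb_ico: "fst J \<le> snd J \<Longrightarrow> has_bochner_integral lborel (indicator (ico J)) (snd J - fst J)"
  using has_bochner_integral_real_indicator[of "ico J" lborel] by (simp add: ico_def)

lemma ind_un: "indicator (ico (third (subI J m) 1) \<union> ico (third (subI J m) 2)) x =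
   (indicator (ico (third (subI J m) 1)) x + indicator (ico (third (subI J m) 2)) x :: real)"
proof -
  have "ico (third (subI J m) 1) \<inter> ico (third (subI J m) 2) = {}"
    by (auto simp: mem_P1 mem_P1' mem_P2)
  then show ?thesis by (auto simp: indicator_def)
qed

lemma geom_step: "(q::real) > 0 \<Longrightarrow> (1 - 1 / q) / 2 + 1 / (3 * q) = (1 - 1 / (3 * q)) / 2"
  by (simp add: field_simps)

lemma geom: "(\<Sum>m = 0..N. 1 / 3^(Suc m) :: real) = (1 - 1 / 3^(Suc N)) / 2"
proof (induction N)
  case 0 then show ?case by simp
next
  case (Suc N)
  have "(\<Sum>m = 0..Suc N. 1 / 3^(Suc m) :: real) = (\<Sum>m = 0..N. 1 / 3^(Suc m)) + 1 / (3 * 3^Suc N)"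
    by simp
  also have "\<dots> = (1 - 1 / (3 * 3^Suc N)) / 2" unfolding Suc.IH by (rule geom_step) simp
  finally show ?case by simp
qed

fun gval :: "nat \<Rightarrow> nat \<Rightarrow> real" where
  "gval k 0 = 4"
| "gval k (Suc \<nu>) = 3 * (1 + eps k) + (1 - 3 * eps k) * gval k \<nu>"

context fixes k :: nat assumes k2: "2 \<le> k" begin

lemma supp:
  assumes "fst J < snd J" "x \<notin> ico J"
  shows "wnu k \<nu> \<omega> \<sigma> J x = 0" "Tm k \<nu> \<omega> J x = 0" "Gm k \<nu> \<omega> J x = 0"
proof -
  have "(wnu k \<nu> \<omega> \<sigma> J x = 0 \<and> Tm k \<nu> \<omega> J x = 0 \<and> Gm k \<nu> \<omega> J x = 0)"
    using assms
  proof (induction \<nu> arbitrary: \<omega> \<sigma> J)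
    case 0
    then have "x \<notin> ico (lefthalf J)" "x \<notin> ico (righthalf J)"
      by (auto simp: ico_def lefthalf_def righthalf_def)
    then show ?case using 0 by (simp add: w0_def)
  next
    case (Suc \<nu>)
    show ?case
    proof (cases rule: loc_cases[OF k2 Suc.prems(1), of x, case_names out p1 p2 q12 q3])
      case out
      have "\<And>m \<omega> \<sigma>. wnu k \<nu> \<omega> \<sigma> (third (subI J m) 2) x = 0 \<and> Tm k \<nu> \<omega> (third (subI J m) 2) x = 0
              \<and> Gm k \<nu> \<omega> (third (subI J m) 2) x = 0"
        using Suc.IH child_pos[OF Suc.prems(1)] out by blast
      then show ?thesis using out by (simp add: ind_un)
    qed (use Suc.prems in auto)
  qed
  then show "wnu k \<nu> \<omega> \<sigma> J x = 0" "Tm k \<nu> \<omega> J x = 0" "Gm k \<nu> \<omega> J x = 0" by auto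
qed

end

lemma hb_cmult: "has_bochner_integral M f a \<Longrightarrow> has_bochner_integral M (\<lambda>x. c * f x) (c * (a::real))"
  by (rule has_bochner_integral_mult_right)

lemma half_le: "fst J \<le> snd J \<Longrightarrow> fst (lefthalf J) \<le> snd (lefthalf J)"
   "fst J \<le> snd J \<Longrightarrow> fst (righthalf J) \<le> snd (righthalf J)"
  by (auto simp: lefthalf_def righthalf_def)

lemma alg1:
  fixes p E c \<omega> L :: real
  assumes "p \<noteq> 0" "(1-3*E)/2 + 2*E + c*E = 3*E*p"
  shows "\<omega>/p*(L*(1-3*E)/2 + (L*E+L*E) + c*(L*E)) + 2*\<omega>*(L*(1-3*E)/2) = \<omega>*L"
proof -
  have "L*(1-3*E)/2 + (L*E+L*E) + c*(L*E) = L*((1-3*E)/2 + 2*E + c*E)" by (simp add: algebra_simps)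
  also have "\<dots> = L*(3*E*p)" using assms(2) by simp
  finally have "\<omega>/p*(L*(1-3*E)/2 + (L*E+L*E) + c*(L*E)) = 3*E*\<omega>*L" using assms(1) by simp
  moreover have "2*\<omega>*(L*(1-3*E)/2) = \<omega>*L - 3*E*\<omega>*L" by (simp add: field_simps)
  ultimately show ?thesis by linarith
qed

lemma hb_cdiv: "has_bochner_integral M f a \<Longrightarrow> has_bochner_integral M (\<lambda>x. f x / c) (a / (c::real))"
  by (rule has_bochner_integral_divide_zero)

lemma alg2:
  fixes p E g \<omega> L :: real
  assumes "E \<noteq> 0"
  shows "4*\<omega>*p*(L*(1-3*E)/2 + (L*E+L*E)) + \<omega>*p*(1+E)/E*(L*E) + g*p*(2*\<omega>)*(L*(1-3*E)/2)
     = (3*(1+E) + (1-3*E)*g)*p*\<omega>*L"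
  using assms by (simp add: field_simps)

lemma hb_eqI: "has_bochner_integral M f x \<Longrightarrow> x = y \<Longrightarrow> has_bochner_integral M f y"
  by simp

context fixes k :: nat assumes k2: "2 \<le> k" begin

lemma p_pos: "0 < pp k" using pp_gt1[OF k2] by simp
lemma u_pos: "0 < uu k" using uu_facts(1)[OF pp_gt1[OF k2]] .

lemma nonneg:
  assumes "0 \<le> \<omega>"
  shows "0 \<le> wnu k \<nu> \<omega> \<sigma> J x" "0 \<le> Tm k \<nu> \<omega> J x" "0 \<le> Gm k \<nu> \<omega> J x"
proof -
  have "0 \<le> wnu k \<nu> \<omega> \<sigma> J x \<and> 0 \<le> Tm k \<nu> \<omega> J x \<and> 0 \<le> Gm k \<nu> \<omega> J x"
    using assms
  proof (induction \<nu> arbitrary: \<omega> \<sigma> J)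
    case 0 then show ?case using p_pos u_pos by (simp add: w0_def)
  next
    case (Suc \<nu>)
    have IH: "\<And>m. 0 \<le> wnu k \<nu> (2*\<omega>) (\<sigma>/2) (third (subI J m) 2) x \<and> 0 \<le> Tm k \<nu> (2*\<omega>) (third (subI J m) 2) x
         \<and> 0 \<le> Gm k \<nu> (2*\<omega>) (third (subI J m) 2) x" using Suc by simp
    have e: "0 < eps k" by (rule eps_pos)
    show ?case using Suc.prems p_pos e IH
      by (auto intro!: add_nonneg_nonneg mult_nonneg_nonneg sum_nonneg divide_nonneg_nonneg)
  qed
  then show "0 \<le> wnu k \<nu> \<omega> \<sigma> J x" "0 \<le> Tm k \<nu> \<omega> J x" "0 \<le> Gm k \<nu> \<omega> J x" by auto
qed

lemma sumL: "(\<Sum>m = 0..k-2. L / 3^Suc m :: real) = L * (1 - 3 * eps k) / 2"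
proof -
  have "(\<Sum>m = 0..k-2. L / 3^Suc m :: real) = L * (\<Sum>m = 0..k-2. 1 / 3^Suc m)"
    by (simp add: sum_distrib_left)
  also have "\<dots> = L * (1 - 1 / 3^(k-1)) / 2"
  proof -
    have e: "Suc (k - 2) = k - 1" using k2 by simp
    show ?thesis using geom[of "k-2", unfolded e] by simp
  qed
  also have "1 / (3::real)^(k-1) = 3 * eps k"
  proof -
    have "(3::real)^k = 3 * 3^(k-1)" using k2 by (metis Suc_diff_1 less_le_trans pos2 power_Suc zero_less_numeral)
    then show ?thesis by (simp add: eps_def)
  qed
  finally show ?thesis .
qed

lemma sk: "Suc (k - 1) = k" using k2 by simp

lemma keyw: "(1-3*eps k)/2 + 2*eps k + 4 * eps k / (1 + eps k) * eps k = 3 * eps k * pp k"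
proof -
  have "4 * eps k / (1 + eps k) * eps k = 4 * (eps k)^2 / (1 + eps k)" by (simp add: power2_eq_square)
  moreover have "(1-3*eps k)/2 + 2*eps k = (1 + eps k)/2" by (simp add: field_simps)
  ultimately show ?thesis using pp_eq[of k] by linarith
qed

lemma Lk: "L / 3^Suc (k - 1) = L * eps k" by (simp only: sk) (simp add: eps_def)

lemma hb_w:
  assumes "fst J < snd J"
  shows "has_bochner_integral lborel (\<lambda>x. wnu k \<nu> \<omega> \<sigma> J x) (\<omega> * (snd J - fst J))"
  using assms
proof (induction \<nu> arbitrary: \<omega> \<sigma> J)
  case 0
  show ?case
    apply (rule hb_eqI)
     apply (simp only: wnu.simps w0_def)
     apply (rule has_bochner_integral_add hb_cmult hb_ico half_le less_imp_le[OF 0])+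
  proof -
    let ?L = "snd J - fst J"
    have hl: "snd (lefthalf J) - fst (lefthalf J) = ?L/2" "snd (righthalf J) - fst (righthalf J) = ?L/2"
      by (simp_all add: lefthalf_def righthalf_def field_simps)
    have "\<omega> / sqrt (pp k) * (uu k * (?L/2) + 1 / uu k * (?L/2)) = \<omega> / sqrt (pp k) * ((uu k + 1 / uu k) * (?L/2))"
      by (simp only: distrib_right)
    also have "\<dots> = \<omega> / sqrt (pp k) * (2 * sqrt (pp k) * (?L/2))"
      using uu_facts(3)[OF pp_gt1[OF k2]] by simp
    also have "\<dots> = \<omega> * ?L" using p_pos by simp
    finally show "\<omega> / sqrt (pp k) * (uu k * (snd (lefthalf J) - fst (lefthalf J)) +
      1 / uu k * (snd (righthalf J) - fst (righthalf J))) = \<omega> * ?L" unfolding hl .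
  qed
next
  case (Suc \<nu>)
  show ?case
    apply (rule hb_eqI)
     apply (simp only: wnu.simps ind_un)
     apply (rule has_bochner_integral_add hb_cmult hb_ico has_bochner_integral_sum Suc.IH third_le child_pos Suc.prems less_imp_le[OF Suc.prems])+
    apply (simp only: len_third Lk sumL sum_distrib_left[symmetric])
    apply (rule alg1)
    using p_pos keyw apply simp_all
    done
qed

lemma hb_G:
  assumes "fst J < snd J"
  shows "has_bochner_integral lborel (\<lambda>x. Gm k \<nu> \<omega> J x) (gval k \<nu> * pp k * \<omega> * (snd J - fst J))"
  using assms
proof (induction \<nu> arbitrary: \<omega> J)
  case 0
  show ?case
    apply (rule hb_eqI)
     apply (simp only: Gm.simps)
     apply (rule has_bochner_integral_add hb_cmult hb_cdiv hb_ico half_le less_imp_le[OF 0])+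
  proof -
    let ?L = "snd J - fst J"
    have hl: "snd (lefthalf J) - fst (lefthalf J) = ?L/2" "snd (righthalf J) - fst (righthalf J) = ?L/2"
      by (simp_all add: lefthalf_def righthalf_def field_simps)
    have "4 * \<omega> * sqrt (pp k) * ((?L/2) / uu k + uu k * (?L/2)) = 4 * \<omega> * sqrt (pp k) * ((uu k + 1 / uu k) * (?L/2))"
      using u_pos by (simp add: field_simps)
    also have "\<dots> = 4 * \<omega> * sqrt (pp k) * (2 * sqrt (pp k) * (?L/2))"
      using uu_facts(3)[OF pp_gt1[OF k2]] by simp
    also have "\<dots> = gval k 0 * pp k * \<omega> * ?L" using p_pos by simp
    finally show "4 * \<omega> * sqrt (pp k) * ((snd (lefthalf J) - fst (lefthalf J)) / uu k +
      uu k * (snd (righthalf J) - fst (righthalf J))) = gval k 0 * pp k * \<omega> * ?L" unfolding hl .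
  qed
next
  case (Suc \<nu>)
  show ?case
    apply (rule hb_eqI)
     apply (simp only: Gm.simps ind_un)
     apply (rule has_bochner_integral_add hb_cmult hb_ico has_bochner_integral_sum Suc.IH third_le child_pos Suc.prems less_imp_le[OF Suc.prems])+
    apply (simp only: len_third Lk sumL sum_distrib_left[symmetric] alg2[OF eps_pos[THEN less_imp_neq, THEN not_sym]])
    apply simp
    done
qed

lemma gval_le: "gval k \<nu> \<le> (1 + eps k) / eps k"
proof (induction \<nu>)
  case 0
  have "eps k \<le> 1/9" by (rule eps_le[OF k2])
  then show ?case using eps_pos[of k] by (simp add: field_simps)
next
  case (Suc \<nu>)
  have e: "0 < eps k" "eps k \<le> 1/9" using eps_pos eps_le[OF k2] by auto
  have "(1 - 3 * eps k) * gval k \<nu> \<le> (1 - 3 * eps k) * ((1 + eps k) / eps k)"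
    using Suc e by (intro mult_left_mono) auto
  moreover have "3 * (1 + eps k) + (1 - 3 * eps k) * ((1 + eps k) / eps k) = (1 + eps k) / eps k"
    using e by (simp add: field_simps)
  ultimately show ?case by simp
qed

end

context fixes k :: nat assumes k2: "2 \<le> k" begin

lemma sk2: "Suc (k - 1) = k" "k - 1 \<noteq> j \<or> \<not> j \<le> k - 2" using k2 by auto

lemma dec:
  assumes J: "fst J < snd J"
  obtains (out) "x \<notin> ico J" "wnu k (Suc \<nu>) \<omega> \<sigma> J x = 0" "Tm k (Suc \<nu>) \<omega> J x = 0" "Gm k (Suc \<nu>) \<omega> J x = 0"
      "\<forall>m. x \<notin> ico (subI J m)" "\<forall>m. x \<notin> ico (third (subI J m) 2)"
      "x \<notin> ico (third (subI J (k-1)) 3)"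
  | (top) "x \<in> ico J" "wnu k (Suc \<nu>) \<omega> \<sigma> J x = \<omega> / pp k" "Tm k (Suc \<nu>) \<omega> J x = 2 * \<omega>"
      "Gm k (Suc \<nu>) \<omega> J x = 4 * \<omega> * pp k" "\<forall>m\<le>k-2. x \<notin> ico (third (subI J m) 2)"
  | (q3) "x \<in> ico J" "wnu k (Suc \<nu>) \<omega> \<sigma> J x = \<omega> / pp k * (4 * eps k / (1 + eps k))"
      "Tm k (Suc \<nu>) \<omega> J x = 2 * \<omega>" "Gm k (Suc \<nu>) \<omega> J x = \<omega> * pp k * (1 + eps k) / eps k"
      "\<forall>m\<le>k-2. x \<notin> ico (third (subI J m) 2)" "x \<in> ico (third (subI J (k-1)) 3)"
  | (ch) j where "j \<le> k - 2" "x \<in> ico J" "x \<in> ico (third (subI J j) 2)"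
      "wnu k (Suc \<nu>) \<omega> \<sigma> J x = wnu k \<nu> (2 * \<omega>) (\<sigma> / 2) (third (subI J j) 2) x"
      "Tm k (Suc \<nu>) \<omega> J x = Tm k \<nu> (2 * \<omega>) (third (subI J j) 2) x"
      "Gm k (Suc \<nu>) \<omega> J x = Gm k \<nu> (2 * \<omega>) (third (subI J j) 2) x"
      "\<forall>m. x \<in> ico (subI J m) \<longleftrightarrow> m \<le> j" "\<forall>m. x \<in> ico (third (subI J m) 2) \<longleftrightarrow> m = j"
proof -
  have cp: "\<And>m. fst (third (subI J m) 2) < snd (third (subI J m) 2)" by (rule child_pos[OF J])
  have z: "\<And>m \<nu> \<omega> \<sigma>. x \<notin> ico (third (subI J m) 2) \<Longrightarrow>
     wnu k \<nu> \<omega> \<sigma> (third (subI J m) 2) x = 0 \<and> Tm k \<nu> \<omega> (third (subI J m) 2) x = 0 \<and> Gm k \<nu> \<omega> (third (subI J m) 2) x = 0"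
    using supp[OF k2 cp] by blast
  show thesis
  proof (cases rule: loc_cases[OF k2 J, of x, case_names out p1 p2 q12 q3])
    case out
    show thesis
    proof (rule that(1))
      show "wnu k (Suc \<nu>) \<omega> \<sigma> J x = 0" by (rule supp(1)[OF k2 J out(1)])
      show "Tm k (Suc \<nu>) \<omega> J x = 0" by (rule supp(2)[OF k2 J out(1)])
      show "Gm k (Suc \<nu>) \<omega> J x = 0" by (rule supp(3)[OF k2 J out(1)])
    qed (use out in auto)
  next
    case (p1 j)
    have s1: "(\<Sum>m = 0..k - 2. indicator (ico (third (subI J m) 1)) x) = (1::real)"
      by (subst sum_single[of _ j]) (use p1 in auto)
    have s1': "(\<Sum>m = 0..k - 2. indicator (ico (third (subI J m) (Suc 0))) x) = (1::real)"
      using s1 by simp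
    have s0: "(\<Sum>m = 0..k - 2. f m) = (0::real)" if "\<And>m. m \<le> k-2 \<Longrightarrow> f m = 0" for f
      using that by (intro sum.neutral) auto
    have q: "x \<notin> ico (third (subI J (k - 1)) 1)" "x \<notin> ico (third (subI J (k - 1)) 2)"
      using p1 k2 by auto
    show thesis
    proof (rule that(2))
      show "wnu k (Suc \<nu>) \<omega> \<sigma> J x = \<omega> / pp k" "Tm k (Suc \<nu>) \<omega> J x = 2 * \<omega>"
        "Gm k (Suc \<nu>) \<omega> J x = 4 * \<omega> * pp k"
        using p1 q by (simp_all add: s1 s1' s0 z)
    qed (use p1 in auto)
  next
    case (p2 j)
    have s0: "(\<Sum>m = 0..k - 2. f m) = (0::real)" if "\<And>m. m \<le> k-2 \<Longrightarrow> f m = 0" for f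
      using that by (intro sum.neutral) auto
    have sj: "(\<Sum>m = 0..k - 2. f m) = (f j::real)" if "\<And>m. m \<le> k-2 \<Longrightarrow> m \<noteq> j \<Longrightarrow> f m = 0" for f
      using that p2 by (intro sum_single) auto
    have q: "x \<notin> ico (third (subI J (k - 1)) 1)" "x \<notin> ico (third (subI J (k - 1)) 2)"
      using p2 k2 by auto
    show thesis
    proof (rule that(4)[of j])
      show "wnu k (Suc \<nu>) \<omega> \<sigma> J x = wnu k \<nu> (2 * \<omega>) (\<sigma> / 2) (third (subI J j) 2) x"
        "Tm k (Suc \<nu>) \<omega> J x = Tm k \<nu> (2 * \<omega>) (third (subI J j) 2) x"
        "Gm k (Suc \<nu>) \<omega> J x = Gm k \<nu> (2 * \<omega>) (third (subI J j) 2) x"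
        using p2 q by (simp_all add: s0 sj z)
    qed (use p2 in auto)
  next
    case q12
    have s0: "(\<Sum>m = 0..k - 2. f m) = (0::real)" if "\<And>m. m \<le> k-2 \<Longrightarrow> f m = 0" for f
      using that by (intro sum.neutral) auto
    show thesis
    proof (rule that(2))
      show "wnu k (Suc \<nu>) \<omega> \<sigma> J x = \<omega> / pp k" "Tm k (Suc \<nu>) \<omega> J x = 2 * \<omega>"
        "Gm k (Suc \<nu>) \<omega> J x = 4 * \<omega> * pp k"
        using q12 by (simp_all add: s0 z)
    qed (use q12 in auto)
  next
    case q3
    have s0: "(\<Sum>m = 0..k - 2. f m) = (0::real)" if "\<And>m. m \<le> k-2 \<Longrightarrow> f m = 0" for f
      using that by (intro sum.neutral) auto
    show thesis
    proof (rule that(3))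
      show "wnu k (Suc \<nu>) \<omega> \<sigma> J x = \<omega> / pp k * (4 * eps k / (1 + eps k))" "Tm k (Suc \<nu>) \<omega> J x = 2 * \<omega>"
        "Gm k (Suc \<nu>) \<omega> J x = \<omega> * pp k * (1 + eps k) / eps k"
        using q3 by (simp_all add: s0 z)
    qed (use q3 in auto)
  qed
qed

end

declare Gm.simps(2)[simp del] wnu.simps(2)[simp del] Tm.simps(2)[simp del]

lemma base_ineq:
  fixes q u \<omega> :: real
  assumes q1: "1 \<le> q" and u1: "1 \<le> u" and uq: "u \<le> 2 * q" and w: "0 < \<omega>"
  shows "4 * \<omega> * q / u \<le> 30 * (q^2)^2 * (\<omega> / q * u)"
    and "4 * \<omega> * q * u \<le> 30 * (q^2)^2 * (\<omega> / q / u)"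
proof -
  have a: "1 \<le> q * q" using mult_mono[of 1 q 1 q] q1 by simp
  have b: "q \<le> q * q * q" using mult_mono[of 1 "q*q" q q] a q1 by simp
  have c: "q * q * q \<le> q * q * q * u" using mult_left_mono[of 1 u "q*q*q"] u1 b q1 by simp
  have "4 * \<omega> * q * (1 / u) \<le> 4 * \<omega> * q" by (rule mult_left_le) (use q1 u1 w in auto)
  then have d: "4 * \<omega> * q / u \<le> 4 * \<omega> * q" by simp
  have e: "\<omega> * q \<le> \<omega> * (q * q * q * u)" using b c w by (intro mult_left_mono) auto
  have f: "0 \<le> \<omega> * q" using w q1 by simp
  have g: "30 * (q^2)^2 * (\<omega> / q * u) = 30 * (\<omega> * (q * q * q * u))" using q1 by (simp add: field_simps power2_eq_square)
  show "4 * \<omega> * q / u \<le> 30 * (q^2)^2 * (\<omega> / q * u)" unfolding g using d e f by linarith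
  have h: "u * u \<le> 4 * (q * q)" using mult_mono[of u "2*q" u "2*q"] uq u1 by simp
  have i: "\<omega> * q * (u * u) \<le> \<omega> * q * (4 * (q * q))" using h f by (rule mult_left_mono)
  have j: "0 \<le> \<omega> * q * (q * q)" using f a by simp
  have "4 * \<omega> * q * u * u \<le> 30 * \<omega> * q * q * q" using i j by (simp add: algebra_simps)
  then have "(4 * \<omega> * q * u * u) / u \<le> (30 * \<omega> * q * q * q) / u"
    using u1 by (intro divide_right_mono) auto
  moreover have "(4 * \<omega> * q * u * u) / u = 4 * \<omega> * q * u" using u1 by simp
  moreover have "30 * (q^2)^2 * (\<omega> / q / u) = (30 * \<omega> * q * q * q) / u" using q1 by (simp add: field_simps power2_eq_square)
  ultimately show "4 * \<omega> * q * u \<le> 30 * (q^2)^2 * (\<omega> / q / u)" by simp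
qed

lemma hb_le: "has_bochner_integral M f v \<Longrightarrow> v \<le> y \<Longrightarrow> integral\<^sup>L M f \<le> (y::real)"
  by (simp add: has_bochner_integral_integral_eq)

lemma sum_le_last:
  fixes f :: "nat \<Rightarrow> real"
  assumes "m0 \<le> N" "\<And>m. m0 \<le> m \<Longrightarrow> m \<le> N \<Longrightarrow> f m \<le> 0"
  shows "sum f {m0..N} \<le> f N"
proof -
  have "sum f {m0..N} = f N + sum f ({m0..N} - {N})" using assms(1) by (simp add: sum.remove)
  moreover have "sum f ({m0..N} - {N}) \<le> 0" using assms(2) by (intro sum_nonpos) auto
  ultimately show ?thesis by simp
qed

lemma fin_alg:
  fixes p E g \<omega> L A S :: real
  assumes p: "0 < p" and E: "0 < E" and w: "0 < \<omega>" and L: "0 < L" and g: "g \<le> 6 * p"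
    and pe: "(1 + E) / E \<le> 6 * p" and S: "S \<le> 2 * \<omega> * (3 * L * E) * p * (g - 30 * p)"
  shows "30 * p^2 * A + \<omega> * p * (1 + E) / E * (L * E) + S \<le> 30 * p^2 * A"
proof -
  have e1: "1 + E \<le> 6 * p * E" using pe E by (simp add: divide_le_eq)
  have a: "\<omega> * p * (1 + E) / E * (L * E) = (\<omega> * p * L) * (1 + E)" using E by (simp add: field_simps)
  have b: "(\<omega> * p * L) * (1 + E) \<le> (\<omega> * p * L) * (6 * p * E)" using e1 p w L by (intro mult_left_mono) auto
  have c: "2 * \<omega> * (3 * L * E) * p * (g - 30 * p) \<le> 2 * \<omega> * (3 * L * E) * p * (6 * p - 30 * p)"
    using g p w L E by (intro mult_left_mono) auto
  have d: "2 * \<omega> * (3 * L * E) * p * (6 * p - 30 * p) = - 24 * ((\<omega> * p * L) * (6 * p * E))" by (simp add: algebra_simps)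
  have f: "0 \<le> (\<omega> * p * L) * (6 * p * E)" using p w L E by simp
  show ?thesis using a b c d f S by linarith
qed

lemma term_eq: "(g::real)*p*(2*\<omega>)*t - 30*p^2*(2*\<omega>*t) = 2*\<omega>*t*p*(g - 30*p)"
  by (simp add: algebra_simps power2_eq_square)

lemma term_le: "0 \<le> (\<omega>::real) \<Longrightarrow> 0 \<le> t \<Longrightarrow> 0 < p \<Longrightarrow> g \<le> 6 * p \<Longrightarrow> 2*\<omega>*t*p*(g - 30*p) \<le> 0"
  by (rule mult_nonneg_nonpos) auto

lemma L3: "2 \<le> k \<Longrightarrow> (L::real) / 3^Suc (k - 2) = 3 * L * eps k"
proof -
  assume k: "2 \<le> k"
  then have e: "Suc (k - 2) = k - 1" by simp
  have "(3::real)^k = 3 * 3^(k-1)" using k by (metis Suc_diff_1 less_le_trans pos2 power_Suc)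
  then show ?thesis unfolding e by (simp add: eps_def field_simps)
qed

lemma halves: "fst J < snd J \<Longrightarrow> (x \<in> ico (lefthalf J) \<and> x \<notin> ico (righthalf J) \<and> x \<in> ico J) \<or>
   (x \<notin> ico (lefthalf J) \<and> x \<in> ico (righthalf J) \<and> x \<in> ico J) \<or> (x \<notin> ico (lefthalf J) \<and> x \<notin> ico (righthalf J) \<and> x \<notin> ico J)"
  by (auto simp: ico_def lefthalf_def righthalf_def)

lemma g1: "(w::real) \<noteq> 0 \<Longrightarrow> c \<noteq> 0 \<Longrightarrow> v \<noteq> 0 \<Longrightarrow> (2 * w) ^ 2 / (w / c * v) = 4 * w * c / v"
  by (simp add: field_simps power2_eq_square)
lemma g2: "(w::real) \<noteq> 0 \<Longrightarrow> c \<noteq> 0 \<Longrightarrow> v \<noteq> 0 \<Longrightarrow> (2 * w) ^ 2 / (w / c * (1 / v)) = 4 * w * c * v"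
  by (simp add: field_simps power2_eq_square)
lemma g3: "(w::real) \<noteq> 0 \<Longrightarrow> p \<noteq> 0 \<Longrightarrow> (2 * w) ^ 2 / (w / p) = 4 * w * p"
  by (simp add: field_simps power2_eq_square)
lemma g4: "(w::real) \<noteq> 0 \<Longrightarrow> p \<noteq> 0 \<Longrightarrow> e > 0 \<Longrightarrow> (2 * w) ^ 2 / (w / p * (4 * e / (1 + e))) = w * p * (1 + e) / e"
proof -
  assume a: "w \<noteq> 0" "p \<noteq> 0" "e > 0"
  have "w / p * (4 * e / (1 + e)) = (4 * w * e) / (p * (1 + e))" by simp
  moreover have "(2 * w) ^ 2 = 4 * w * w" by (simp add: power2_eq_square)
  ultimately have "(2 * w) ^ 2 / (w / p * (4 * e / (1 + e))) = (4 * w * w) * (p * (1 + e)) / (4 * w * e)" by simp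
  also have "\<dots> = w * p * (1 + e) / e" using a by (simp add: field_simps)
  finally show ?thesis .
qed

context fixes k :: nat assumes k2: "2 \<le> k" begin

lemma PW:
  assumes "fst J < snd J" "0 < \<omega>"
  shows "(Tm k \<nu> \<omega> J x)^2 / wnu k \<nu> \<omega> \<sigma> J x = Gm k \<nu> \<omega> J x"
  using assms
proof (induction \<nu> arbitrary: \<omega> \<sigma> J)
  case 0
  have u: "uu k \<noteq> 0" using u_pos[OF k2] by simp
  have p: "sqrt (pp k) \<noteq> 0" using p_pos[OF k2] by simp
  consider (l) "x \<in> ico (lefthalf J)" "x \<notin> ico (righthalf J)" "x \<in> ico J"
    | (r) "x \<notin> ico (lefthalf J)" "x \<in> ico (righthalf J)" "x \<in> ico J"
    | (o) "x \<notin> ico (lefthalf J)" "x \<notin> ico (righthalf J)" "x \<notin> ico J"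
    using halves[OF 0(1), of x] by blast
  then show ?case
  proof cases
    case l
    have "wnu k 0 \<omega> \<sigma> J x = \<omega> / sqrt (pp k) * uu k" "Tm k 0 \<omega> J x = 2 * \<omega>"
      "Gm k 0 \<omega> J x = 4 * \<omega> * sqrt (pp k) / uu k" using l by (simp_all add: w0_def)
    then show ?thesis using g1[of \<omega> "sqrt (pp k)" "uu k"] u p 0 by simp
  next
    case r
    have "wnu k 0 \<omega> \<sigma> J x = \<omega> / sqrt (pp k) * (1 / uu k)" "Tm k 0 \<omega> J x = 2 * \<omega>"
      "Gm k 0 \<omega> J x = 4 * \<omega> * sqrt (pp k) * uu k" using r by (simp_all add: w0_def)
    then show ?thesis using g2[of \<omega> "sqrt (pp k)" "uu k"] u p 0 by simp
  next
    case o then show ?thesis by (simp add: w0_def)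
  qed
next
  case (Suc \<nu>)
  have p: "pp k \<noteq> 0" using p_pos[OF k2] by simp
  have e: "0 < eps k" by (rule eps_pos)
  show ?case
  proof (cases rule: dec[OF k2 Suc.prems(1), where x=x and \<nu>=\<nu> and \<omega>=\<omega> and \<sigma>=\<sigma>, case_names out top q3 ch])
    case out then show ?thesis by (simp only: out(2-4)) simp
  next
    case top then show ?thesis using p Suc.prems by (simp only: top(2-4)) (rule g3; simp)
  next
    case q3 then show ?thesis using p e Suc.prems by (simp only: q3(2-4)) (rule g4; simp)
  next
    case (ch j)
    then show ?thesis using Suc.IH[OF child_pos[OF Suc.prems(1)], of "2*\<omega>" j "\<sigma>/2"] Suc.prems
      by (simp only: ch(4-6))
  qed
qed

lemma u_le: "uu k \<le> 2 * sqrt (pp k)"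
proof -
  have "sqrt (pp k - 1) \<le> sqrt (pp k)" by (rule real_sqrt_le_mono) simp
  then show ?thesis by (simp add: uu_def)
qed

lemma sets_ico[simp]: "ico S \<in> sets lborel" by (simp add: ico_def)

lemma intW: assumes "fst J < snd J" shows "integrable lborel (\<lambda>x. indicator (ico S) x * wnu k \<nu> \<omega> \<sigma> J x)"
proof -
  have "integrable lborel (\<lambda>x. wnu k \<nu> \<omega> \<sigma> J x)" using hb_w[OF k2 assms] by (simp add: has_bochner_integral_iff)
  from integrable_real_mult_indicator[OF sets_ico this] show ?thesis by (simp add: mult.commute)
qed
lemma intG: assumes "fst J < snd J" shows "integrable lborel (\<lambda>x. indicator (ico S) x * Gm k \<nu> \<omega> J x)"
proof -
  have "integrable lborel (\<lambda>x. Gm k \<nu> \<omega> J x)" using hb_G[OF k2 assms] by (simp add: has_bochner_integral_iff)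
  from integrable_real_mult_indicator[OF sets_ico this] show ?thesis by (simp add: mult.commute)
qed

lemma M6_base:
  assumes J: "fst J < snd J" and w: "0 < \<omega>"
  shows "indicator S x * Gm k 0 \<omega> J x \<le> 30 * (pp k)^2 * (indicator S x * wnu k 0 \<omega> \<sigma> J x)"
proof -
  have p1: "1 < pp k" by (rule pp_gt1[OF k2])
  have q1: "1 \<le> sqrt (pp k)" using p1 by simp
  have qq: "(sqrt (pp k))^2 = pp k" using p1 by simp
  have u1: "1 \<le> uu k" by (rule uu_facts(2)[OF p1])
  note bi = base_ineq[OF q1 u1 u_le w, unfolded qq]
  have core: "Gm k 0 \<omega> J x \<le> 30 * (pp k)^2 * wnu k 0 \<omega> \<sigma> J x"
  proof -
    consider (l) "x \<in> ico (lefthalf J)" "x \<notin> ico (righthalf J)"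
      | (r) "x \<notin> ico (lefthalf J)" "x \<in> ico (righthalf J)"
      | (o) "x \<notin> ico (lefthalf J)" "x \<notin> ico (righthalf J)"
      using halves[OF J, of x] by blast
    then show ?thesis
    proof cases
      case l
      have e: "wnu k 0 \<omega> \<sigma> J x = \<omega> / sqrt (pp k) * uu k"
        "Gm k 0 \<omega> J x = 4 * \<omega> * sqrt (pp k) / uu k" using l by (simp_all add: w0_def)
      show ?thesis unfolding e by (rule bi(1))
    next
      case r
      have e: "wnu k 0 \<omega> \<sigma> J x = \<omega> / sqrt (pp k) / uu k"
        "Gm k 0 \<omega> J x = 4 * \<omega> * sqrt (pp k) * uu k" using r by (simp_all add: w0_def)
      show ?thesis unfolding e by (rule bi(2))
    next
      case o then show ?thesis by (simp add: w0_def)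
    qed
  qed
  show ?thesis
    by (cases "x \<in> S") (use core in auto)
qed

lemma M6_pw:
  assumes J: "fst J < snd J" and w: "0 < \<omega>" and m0: "m0 \<le> k - 2"
  shows "indicator (ico (subI J m0)) x * Gm k (Suc \<nu>) \<omega> J x \<le>
   30 * (pp k)^2 * (indicator (ico (subI J m0)) x * wnu k (Suc \<nu>) \<omega> \<sigma> J x)
   + \<omega> * pp k * (1 + eps k) / eps k * indicator (ico (third (subI J (k-1)) 3)) x
   + (\<Sum>m'=m0..k-2. Gm k \<nu> (2*\<omega>) (third (subI J m') 2) x - 30 * (pp k)^2 * wnu k \<nu> (2*\<omega>) (\<sigma>/2) (third (subI J m') 2) x)"
    (is "?ind * ?G \<le> 30 * (pp k)^2 * (?ind * ?W) + ?c * ?iq + ?S")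
proof -
  have p: "0 < pp k" by (rule p_pos[OF k2])
  have e: "0 < eps k" by (rule eps_pos)
  have c0: "0 \<le> ?c" using p e w by simp
  have iq: "0 \<le> ?iq" by simp
  have cp: "\<And>m. fst (third (subI J m) 2) < snd (third (subI J m) 2)" by (rule child_pos[OF J])
  have zc: "\<And>m'. x \<notin> ico (third (subI J m') 2) \<Longrightarrow>
      Gm k \<nu> (2*\<omega>) (third (subI J m') 2) x - 30 * (pp k)^2 * wnu k \<nu> (2*\<omega>) (\<sigma>/2) (third (subI J m') 2) x = 0"
    using supp[OF k2 cp] by simp
  have S0: "?S = 0" if "\<And>m'. m0 \<le> m' \<Longrightarrow> m' \<le> k - 2 \<Longrightarrow> x \<notin> ico (third (subI J m') 2)"
    using that zc by (intro sum.neutral) auto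
  have wn: "0 \<le> ?W" by (rule nonneg(1)[OF k2]) (use w in simp)
  show ?thesis
  proof (cases rule: dec[OF k2 J, where x=x and \<nu>=\<nu> and \<omega>=\<omega> and \<sigma>=\<sigma>, case_names out top q3 ch])
    case out
    have "?ind = 0" "?iq = 0" using out by auto
    moreover have "?S = 0" using out by (intro S0) auto
    ultimately show ?thesis by simp
  next
    case top
    have S: "?S = 0" using top m0 by (intro S0) auto
    have "4 * \<omega> * pp k \<le> 30 * (pp k)^2 * (\<omega> / pp k)" using p w by (simp add: power2_eq_square)
    then have "?ind * (4 * \<omega> * pp k) \<le> 30 * (pp k)^2 * (?ind * (\<omega> / pp k))"
      by (cases "x \<in> ico (subI J m0)") auto
    then show ?thesis unfolding S top(2,4) using c0 iq by (smt (verit) mult_nonneg_nonneg)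
  next
    case q3
    have S: "?S = 0" using q3 m0 by (intro S0) auto
    have "?iq = 1" using q3 by simp
    then have "?c * ?iq = ?c" by simp
    moreover have "?ind * ?G \<le> ?c" unfolding q3(4) using c0 by (cases "x \<in> ico (subI J m0)") auto
    moreover have "0 \<le> 30 * (pp k)^2 * (?ind * ?W)" using wn by simp
    ultimately show ?thesis unfolding S by linarith
  next
    case (ch j)
    show ?thesis
    proof (cases "m0 \<le> j")
      case True
      have "?S = Gm k \<nu> (2*\<omega>) (third (subI J j) 2) x - 30 * (pp k)^2 * wnu k \<nu> (2*\<omega>) (\<sigma>/2) (third (subI J j) 2) x"
      proof (rule sum_single)
        fix m assume "m \<in> {m0..k-2}" "m \<noteq> j"
        then have "x \<notin> ico (third (subI J m) 2)" using ch(8) by simp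
        then show "Gm k \<nu> (2*\<omega>) (third (subI J m) 2) x - 30 * (pp k)^2 * wnu k \<nu> (2*\<omega>) (\<sigma>/2) (third (subI J m) 2) x = 0"
          by (rule zc)
      qed (use ch True in auto)
      moreover have "?ind = 1" using ch True by simp
      ultimately show ?thesis unfolding ch(4,6) using mult_nonneg_nonneg[OF c0 iq] by (simp only: mult_1)
    next
      case False
      have "?S = 0" using ch False by (intro S0) auto
      moreover have "?ind = 0" using ch False by simp
      ultimately show ?thesis using mult_nonneg_nonneg[OF c0 iq] by (simp only: mult_0 mult_0_right add_0_right add_0)
    qed
  qed
qed

lemma M6:
  assumes J: "fst J < snd J" and w: "0 < \<omega>" and m0: "m0 \<le> k - 2"
  shows "integral\<^sup>L lborel (\<lambda>x. indicator (ico (subI J m0)) x * Gm k \<nu> \<omega> J x)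
     \<le> 30 * (pp k)^2 * integral\<^sup>L lborel (\<lambda>x. indicator (ico (subI J m0)) x * wnu k \<nu> \<omega> \<sigma> J x)"
proof (cases \<nu>)
  case 0
  have "integral\<^sup>L lborel (\<lambda>x. indicator (ico (subI J m0)) x * Gm k \<nu> \<omega> J x)
     \<le> integral\<^sup>L lborel (\<lambda>x. 30 * (pp k)^2 * (indicator (ico (subI J m0)) x * wnu k \<nu> \<omega> \<sigma> J x))"
    unfolding 0 by (intro integral_mono intG[OF J] integrable_mult_right intW[OF J] M6_base[OF J w])
  also have "\<dots> = 30 * (pp k)^2 * integral\<^sup>L lborel (\<lambda>x. indicator (ico (subI J m0)) x * wnu k \<nu> \<omega> \<sigma> J x)"
    by (rule integral_mult_right_zero)
  finally show ?thesis .
next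
  case (Suc \<nu>')
  define A where "A = integral\<^sup>L lborel (\<lambda>x. indicator (ico (subI J m0)) x * wnu k (Suc \<nu>') \<omega> \<sigma> J x)"
  have hA: "has_bochner_integral lborel (\<lambda>x. indicator (ico (subI J m0)) x * wnu k (Suc \<nu>') \<omega> \<sigma> J x) A"
    using intW[OF J] by (simp add: A_def has_bochner_integral_iff)
  have p: "0 < pp k" by (rule p_pos[OF k2])
  have e: "0 < eps k" by (rule eps_pos)
  have L: "0 < snd J - fst J" using J by simp
  have "integral\<^sup>L lborel (\<lambda>x. indicator (ico (subI J m0)) x * Gm k (Suc \<nu>') \<omega> J x) \<le>
     integral\<^sup>L lborel (\<lambda>x. 30 * (pp k)^2 * (indicator (ico (subI J m0)) x * wnu k (Suc \<nu>') \<omega> \<sigma> J x)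
   + \<omega> * pp k * (1 + eps k) / eps k * indicator (ico (third (subI J (k-1)) 3)) x
   + (\<Sum>m'=m0..k-2. Gm k \<nu>' (2*\<omega>) (third (subI J m') 2) x - 30 * (pp k)^2 * wnu k \<nu>' (2*\<omega>) (\<sigma>/2) (third (subI J m') 2) x))"
    apply (rule integral_mono[OF intG[OF J]])
     apply (rule integrable.intros)
     apply (rule has_bochner_integral_add hb_cmult hb_ico has_bochner_integral_sum has_bochner_integral_diff
        hb_G[OF k2] hb_w[OF k2] child_pos third_le J less_imp_le[OF J] hA)+
    apply (rule M6_pw[OF J w m0])
    done
  also have "\<dots> \<le> 30 * (pp k)^2 * A"
    apply (rule hb_le)
     apply (rule has_bochner_integral_add hb_cmult hb_ico has_bochner_integral_sum has_bochner_integral_diff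
        hb_G[OF k2] hb_w[OF k2] child_pos third_le J less_imp_le[OF J] hA)+
    apply (simp only: len_third Lk[OF k2])
    apply (rule fin_alg[OF p e w L gval_le[OF k2, of \<nu>', THEN order_trans, OF pp_ge] pp_ge])
    apply (rule order_trans[OF sum_le_last])
      apply (rule m0)
     apply (simp only: term_eq)
     apply (rule term_le)
        apply (use w p L gval_le[OF k2, of \<nu>'] pp_ge[of k] in auto)[4]
    apply (simp only: term_eq L3[OF k2])
    done
  finally show ?thesis unfolding Suc A_def .
qed

end

definition shift :: "real \<Rightarrow> real \<times> real \<Rightarrow> real \<times> real" where
  "shift c J = (fst J + c, snd J + c)"

lemma shift_subI: "subI (shift c J) m = shift c (subI J m)"
  by (simp add: subI_def shift_def)
lemma shift_third: "third (shift c J) i = shift c (third J i)"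
  by (simp add: third_def shift_def algebra_simps)
lemma shift_half: "lefthalf (shift c J) = shift c (lefthalf J)" "righthalf (shift c J) = shift c (righthalf J)"
  by (simp_all add: lefthalf_def righthalf_def shift_def field_simps)
lemma shift_ind: "indicator (ico (shift c J)) (x + c) = (indicator (ico J) x :: real)"
  by (simp add: ico_def shift_def indicator_def)
lemma shift_ind_un: "indicator (ico (shift c A) \<union> ico (shift c B)) (x + c) = (indicator (ico A \<union> ico B) x :: real)"
  by (simp add: ico_def shift_def indicator_def)

lemma wnu_shift: "wnu k \<nu> \<omega> \<sigma> (shift c J) (x + c) = wnu k \<nu> \<omega> \<sigma> J x"
proof (induction \<nu> arbitrary: \<omega> \<sigma> J)
  case 0 then show ?case by (simp add: w0_def shift_half shift_ind)
next
  case (Suc \<nu>)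
  then show ?case by (simp add: wnu.simps(2) shift_subI shift_third shift_ind shift_ind_un)
qed

context fixes k :: nat assumes k2: "2 \<le> k" begin

lemma carries_facts:
  assumes "carries k \<nu> I"
  shows "\<nu> \<le> nn k \<and> fst I < snd I \<and> (\<exists>\<sigma>. \<forall>x\<in>ico I. ww k x = wnu k \<nu> (2^(nn k - \<nu>)) \<sigma> I x)"
  using assms
proof (induction rule: carries.induct)
  case (base j)
  have "\<forall>x\<in>ico (real_of_int j, real_of_int j + 1). ww k x = wnu k (nn k) (2^(nn k - nn k)) (pp k) (real_of_int j, real_of_int j + 1) x"
  proof
    fix x assume x: "x \<in> ico (real_of_int j, real_of_int j + 1)"
    then have "\<lfloor>x\<rfloor> = j" by (simp add: ico_def floor_eq_iff)
    then have fx: "frac x = x - real_of_int j" by (simp add: frac_def)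
    have sh: "(real_of_int j, real_of_int j + 1) = shift (real_of_int j) (0, 1)" by (simp add: shift_def)
    have "wnu k (nn k) 1 (pp k) (real_of_int j, real_of_int j + 1) x
        = wnu k (nn k) 1 (pp k) (shift (real_of_int j) (0, 1)) ((x - real_of_int j) + real_of_int j)"
      by (simp add: sh)
    also have "\<dots> = wnu k (nn k) 1 (pp k) (0, 1) (frac x)" unfolding wnu_shift fx ..
    finally show "ww k x = wnu k (nn k) (2^(nn k - nn k)) (pp k) (real_of_int j, real_of_int j + 1) x"
      by (simp add: ww_def)
  qed
  then show ?case by auto
next
  case (step \<nu> I m)
  from step.IH obtain \<sigma> where le: "Suc \<nu> \<le> nn k" and J: "fst I < snd I"
    and h: "\<forall>x\<in>ico I. ww k x = wnu k (Suc \<nu>) (2^(nn k - Suc \<nu>)) \<sigma> I x" by blast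
  have pw: "2 * (2::real)^(nn k - Suc \<nu>) = 2^(nn k - \<nu>)"
    using le by (metis Suc_diff_Suc Suc_le_lessD power_Suc)
  have "\<forall>x\<in>ico (third (subI I m) 2). ww k x = wnu k \<nu> (2^(nn k - \<nu>)) (\<sigma>/2) (third (subI I m) 2) x"
  proof
    fix x assume x: "x \<in> ico (third (subI I m) 2)"
    show "ww k x = wnu k \<nu> (2^(nn k - \<nu>)) (\<sigma>/2) (third (subI I m) 2) x"
    proof (cases rule: dec[OF k2 J, where x=x and \<nu>=\<nu> and \<omega>="2^(nn k - Suc \<nu>)" and \<sigma>=\<sigma>, case_names out top q3 ch])
      case out then show ?thesis using x by auto
    next
      case top then show ?thesis using x step.hyps(2) by auto
    next
      case q3 then show ?thesis using x step.hyps(2) by auto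
    next
      case (ch j)
      have "j = m" using ch(8) x by auto
      then show ?thesis using ch h pw by auto
    qed
  qed
  then show ?case using le child_pos[OF J, of m] by auto
qed

lemma child_info:
  assumes J: "fst J < snd J" and x: "x \<in> ico (third (subI J m) 2)" and m: "m \<le> k - 2"
  shows "x \<in> ico J" "\<And>m'. x \<in> ico (third (subI J m') 2) \<longleftrightarrow> m' = m"
proof -
  have "x \<in> ico J \<and> (\<forall>m'. x \<in> ico (third (subI J m') 2) \<longleftrightarrow> m' = m)"
  proof (cases rule: dec[OF k2 J, where x=x and \<nu>=0 and \<omega>=1 and \<sigma>=1, case_names out top q3 ch])
    case out then show ?thesis using x by auto
  next
    case top then show ?thesis using x m by auto
  next
    case q3 then show ?thesis using x m by auto
  next
    case (ch j)
    have "j = m" using ch(8) x by auto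
    then show ?thesis using ch by auto
  qed
  then show "x \<in> ico J" "\<And>m'. x \<in> ico (third (subI J m') 2) \<longleftrightarrow> m' = m" by auto
qed

lemma carries_unique:
  assumes "carries k \<nu> I" "carries k \<nu> J" "x \<in> ico I" "x \<in> ico J"
  shows "I = J"
  using assms
proof (induction arbitrary: J rule: carries.induct)
  case (base j)
  from base.prems(1) show ?case
  proof (cases rule: carries.cases)
    case (base j')
    note Jeq = this
    have "\<lfloor>x\<rfloor> = j" using \<open>x \<in> ico (real_of_int j, real_of_int j + 1)\<close> by (simp add: ico_def floor_eq_iff)
    moreover have "\<lfloor>x\<rfloor> = j'" using \<open>x \<in> ico J\<close> Jeq by (simp add: ico_def floor_eq_iff)
    ultimately show ?thesis using Jeq by simp
  next
    case (step I' m)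
    then show ?thesis using carries_facts[OF step(2)] by simp
  qed
next
  case (step \<nu> I m)
  have JI: "fst I < snd I" and le: "Suc \<nu> \<le> nn k" using carries_facts[OF step.hyps(1)] by auto
  have xI: "x \<in> ico I" by (rule child_info(1)[OF JI step.prems(2) step.hyps(2)])
  from step.prems(1) show ?case
  proof (cases rule: carries.cases)
    case (base j)
    then show ?thesis using le by simp
  next
    case (step J' m')
    have JJ: "fst J' < snd J'" using carries_facts[OF step(2)] by auto
    have xJ: "x \<in> ico J'" using child_info(1)[OF JJ _ step(3)] step(1) step.prems(3) by simp
    have "I = J'" using step.IH[OF step(2) xI xJ] .
    moreover have "m' = m" using child_info(2)[OF JI step.prems(2) step.hyps(2), of m'] step.prems(3) step(1) calculation by simp
    ultimately show ?thesis using step(1) by simp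
  qed
qed

lemma supp_step: "Suc \<nu> \<le> nn k \<Longrightarrow> suppw k \<nu> \<subseteq> suppw k (Suc \<nu>)"
proof
  fix x assume le: "Suc \<nu> \<le> nn k" and "x \<in> suppw k \<nu>"
  then obtain J where cJ: "carries k \<nu> J" and xJ: "x \<in> ico J" by (auto simp: suppw_def)
  from cJ show "x \<in> suppw k (Suc \<nu>)"
  proof (cases rule: carries.cases)
    case (base j) then show ?thesis using le by simp
  next
    case (step J' m')
    have JJ: "fst J' < snd J'" using carries_facts[OF step(2)] by auto
    have "x \<in> ico J'" using child_info(1)[OF JJ _ step(3)] step(1) xJ by simp
    then show ?thesis using step(2) unfolding suppw_def by blast
  qed
qed

lemma supp_mono: "\<nu> \<le> \<nu>' \<Longrightarrow> \<nu>' \<le> nn k \<Longrightarrow> suppw k \<nu> \<subseteq> suppw k \<nu>'"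
proof (induction \<nu>' rule: dec_induct)
  case base then show ?case by simp
next
  case (step n') then show ?case using supp_step[of n'] by auto
qed

lemma wt_nonneg: "0 \<le> wtilde k x"
  unfolding wtilde_def by (intro add_nonneg_nonneg sum_nonneg) auto

lemma wt_le:
  assumes le: "\<nu>0 \<le> nn k" and nx: "\<nu>0 = 0 \<or> x \<notin> suppw k (\<nu>0 - 1)"
  shows "wtilde k x \<le> 2 ^ (nn k - \<nu>0 + 1)"
proof -
  let ?n = "nn k"
  define D where "D l = suppw k (?n - (l - 1)) - suppw k (?n - l)" for l
  have A: "l \<le> ?n - \<nu>0 + 1" if "l \<in> {1..?n}" "x \<in> D l" for l
  proof (rule ccontr)
    assume "\<not> l \<le> ?n - \<nu>0 + 1"
    then have "?n - (l - 1) \<le> \<nu>0 - 1" "\<nu>0 \<noteq> 0" using that(1) le by auto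
    moreover have "x \<in> suppw k (?n - (l - 1))" using that(2) unfolding D_def by blast
    ultimately have "x \<in> suppw k (\<nu>0 - 1)" using supp_mono[of "?n - (l - 1)" "\<nu>0 - 1"] le
      by (meson diff_le_self le_trans subsetD)
    then show False using nx \<open>\<nu>0 \<noteq> 0\<close> by simp
  qed
  have B: "l1 = l2" if "l1 \<in> {1..?n}" "l2 \<in> {1..?n}" "x \<in> D l1" "x \<in> D l2" for l1 l2
  proof (rule ccontr)
    assume ne: "l1 \<noteq> l2"
    have *: "False" if "a < b" "a \<in> {1..?n}" "b \<in> {1..?n}" "x \<in> D a" "x \<in> D b" for a b
    proof -
      have "x \<in> suppw k (?n - (b - 1))" using that(5) by (simp add: D_def)
      moreover have "?n - (b - 1) \<le> ?n - a" using that by auto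
      ultimately have "x \<in> suppw k (?n - a)" using supp_mono[of "?n - (b - 1)" "?n - a"] by auto
      then show False using that(4) by (simp add: D_def)
    qed
    show False using ne *[of l1 l2] *[of l2 l1] that by (cases "l1 < l2") auto
  qed
  have C: "x \<notin> suppw k 0" if "l \<in> {1..?n}" "x \<in> D l" for l
    using that supp_mono[of 0 "?n - l"] by (auto simp: D_def)
  have wt: "wtilde k x = (\<Sum>l = 1..?n. 2 ^ l * indicator (D l) x) + 2 ^ (?n + 1) * indicator (suppw k 0) x"
    by (simp add: wtilde_def D_def)
  show ?thesis
  proof (cases "\<exists>l0\<in>{1..?n}. x \<in> D l0")
    case True
    then obtain l0 where l0: "l0 \<in> {1..?n}" "x \<in> D l0" by blast
    have "(\<Sum>l = 1..?n. 2 ^ l * indicator (D l) x) = (2::real) ^ l0 * indicator (D l0) x"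
    proof (rule sum_single)
      fix l assume l: "l \<in> {1..?n}" "l \<noteq> l0"
      have "x \<notin> D l" using B[OF l(1) l0(1)] l(2) l0(2) by blast
      then show "(2::real) ^ l * indicator (D l) x = 0" by simp
    qed (use l0 in auto)
    then have "wtilde k x = 2 ^ l0" unfolding wt using l0 C[OF l0] by simp
    also have "(2::real) ^ l0 \<le> 2 ^ (?n - \<nu>0 + 1)" by (rule power_increasing) (use A[OF l0] in auto)
    finally show ?thesis .
  next
    case False
    then have "(\<Sum>l = 1..?n. 2 ^ l * indicator (D l) x) = (0::real)" by (intro sum.neutral) auto
    then have wt0: "wtilde k x = 2 ^ (?n + 1) * indicator (suppw k 0) x" unfolding wt by simp
    show ?thesis
    proof (cases "\<nu>0 = 0")
      case True then show ?thesis unfolding wt0 by (simp add: indicator_def)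
    next
      case False
      have "suppw k 0 \<subseteq> suppw k (\<nu>0 - 1)" using le by (intro supp_mono) auto
      then have "x \<notin> suppw k 0" using nx False by blast
      then show ?thesis unfolding wt0 by simp
    qed
  qed
qed

lemma wt_Tm: "carries k \<nu> I \<Longrightarrow> x \<in> ico I \<Longrightarrow> wtilde k x \<le> Tm k \<nu> (2^(nn k - \<nu>)) I x"
proof (induction \<nu> arbitrary: I)
  case 0
  have "wtilde k x \<le> 2 ^ (nn k - 0 + 1)" by (rule wt_le) auto
  then show ?case using 0 by simp
next
  case (Suc \<nu>)
  have le: "Suc \<nu> \<le> nn k" and J: "fst I < snd I" using carries_facts[OF Suc.prems(1)] by auto
  have pw: "2 * (2::real)^(nn k - Suc \<nu>) = 2^(nn k - \<nu>)"
    using le by (metis Suc_diff_Suc Suc_le_lessD power_Suc)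
  have top_case: "wtilde k x \<le> 2 * 2^(nn k - Suc \<nu>)"
    if nc: "\<forall>m\<le>k-2. x \<notin> ico (third (subI I m) 2)"
  proof -
    have "x \<notin> suppw k \<nu>"
    proof
      assume "x \<in> suppw k \<nu>"
      then obtain J0 where cJ: "carries k \<nu> J0" and xJ: "x \<in> ico J0" by (auto simp: suppw_def)
      from cJ show False
      proof (cases rule: carries.cases)
        case (base j) then show False using le by simp
      next
        case (step J' m')
        have JJ: "fst J' < snd J'" using carries_facts[OF step(2)] by auto
        have "x \<in> ico J'" using child_info(1)[OF JJ _ step(3)] step(1) xJ by simp
        then have "J' = I" using carries_unique[OF step(2) Suc.prems(1) _ Suc.prems(2)] by simp
        then show False using nc step xJ by auto
      qed
    qed
    then have "wtilde k x \<le> 2 ^ (nn k - Suc \<nu> + 1)" using le by (intro wt_le) auto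
    also have "(2::real) ^ (nn k - Suc \<nu> + 1) = 2 * 2^(nn k - Suc \<nu>)" by simp
    finally show ?thesis .
  qed
  show ?case
  proof (cases rule: dec[OF k2 J, where x=x and \<nu>=\<nu> and \<omega>="2^(nn k - Suc \<nu>)" and \<sigma>=1, case_names out top q3 ch])
    case out then show ?thesis using Suc.prems by auto
  next
    case top then show ?thesis using top_case by simp
  next
    case q3 then show ?thesis using top_case by simp
  next
    case (ch j)
    have "carries k \<nu> (third (subI I j) 2)" by (rule carries.step[OF Suc.prems(1) ch(1)])
    from Suc.IH[OF this ch(3)] show ?thesis using ch(5) pw by simp
  qed
qed

end
theorem proposition4:
  fixes k l m :: nat and I :: "real \<times> real"
  assumes "k \<ge> 2"
    and "l \<le> nn k"
    and "carries k (nn k - l) I"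
    and "m \<le> k - 2"
  shows "(LINT x:ico (subI I m)|lborel. (wtilde k x)^2 * sig k x)
           \<le> 30 * (pp k)^2 * (LINT x:ico (subI I m)|lborel. ww k x)"
proof -
  note k2 = assms(1)
  define \<nu> where "\<nu> = nn k - l"
  define \<omega> :: real where "\<omega> = 2^(nn k - \<nu>)"
  have cI: "carries k \<nu> I" using assms(3) by (simp add: \<nu>_def)
  obtain \<sigma> where J: "fst I < snd I" and h: "\<forall>x\<in>ico I. ww k x = wnu k \<nu> \<omega> \<sigma> I x"
    using carries_facts[OF k2 cI] unfolding \<omega>_def by blast
  have w: "0 < \<omega>" by (simp add: \<omega>_def)
  have sub: "x \<in> ico I" if "x \<in> ico (subI I m)" for x
  proof -
    have "(snd I - fst I) / 3^m \<le> snd I - fst I" using J by (intro pow_div_mono[of _ 0, simplified]) auto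
    moreover have "0 < snd I - x \<and> snd I - x \<le> (snd I - fst I) / 3^m" using that mem_sub by blast
    ultimately show ?thesis unfolding mem_ico by linarith
  qed
  have "(LINT x:ico (subI I m)|lborel. (wtilde k x)^2 * sig k x)
      = integral\<^sup>L lborel (\<lambda>x. indicator (ico (subI I m)) x * ((wtilde k x)^2 * sig k x))"
    by (simp add: set_lebesgue_integral_def)
  also have "\<dots> \<le> integral\<^sup>L lborel (\<lambda>x. indicator (ico (subI I m)) x * Gm k \<nu> \<omega> I x)"
  proof (rule integral_mono'[OF intG[OF k2 J]])
    fix x :: real
    show "0 \<le> indicator (ico (subI I m)) x * Gm k \<nu> \<omega> I x"
      using nonneg(3)[OF k2, of \<omega>] w by simp
    show "indicator (ico (subI I m)) x * ((wtilde k x)^2 * sig k x) \<le> indicator (ico (subI I m)) x * Gm k \<nu> \<omega> I x"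
    proof (cases "x \<in> ico (subI I m)")
      case True
      then have xI: "x \<in> ico I" by (rule sub)
      have W0: "0 \<le> wnu k \<nu> \<omega> \<sigma> I x" using nonneg(1)[OF k2, of \<omega>] w by simp
      have t: "wtilde k x \<le> Tm k \<nu> \<omega> I x" unfolding \<omega>_def by (rule wt_Tm[OF k2 cI xI])
      have "(wtilde k x)^2 \<le> (Tm k \<nu> \<omega> I x)^2" by (rule power_mono[OF t wt_nonneg[OF k2]])
      then have "(wtilde k x)^2 / wnu k \<nu> \<omega> \<sigma> I x \<le> (Tm k \<nu> \<omega> I x)^2 / wnu k \<nu> \<omega> \<sigma> I x"
        using W0 by (rule divide_right_mono)
      also have "\<dots> = Gm k \<nu> \<omega> I x" by (rule PW[OF k2 J w])
      finally have "(wtilde k x)^2 * sig k x \<le> Gm k \<nu> \<omega> I x"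
        using h xI by (simp add: sig_def)
      then show ?thesis using True by simp
    qed simp
  qed
  also have "\<dots> \<le> 30 * (pp k)^2 * integral\<^sup>L lborel (\<lambda>x. indicator (ico (subI I m)) x * wnu k \<nu> \<omega> \<sigma> I x)"
    by (rule M6[OF k2 J w assms(4)])
  also have "integral\<^sup>L lborel (\<lambda>x. indicator (ico (subI I m)) x * wnu k \<nu> \<omega> \<sigma> I x)
      = (LINT x:ico (subI I m)|lborel. ww k x)"
    unfolding set_lebesgue_integral_def
  proof (rule Bochner_Integration.integral_cong[OF refl])
    fix x :: real
    show "indicator (ico (subI I m)) x * wnu k \<nu> \<omega> \<sigma> I x = indicator (ico (subI I m)) x *\<^sub>R ww k x"
      using h sub by (cases "x \<in> ico (subI I m)") auto
  qed
  finally show ?thesis .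
qed

end
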